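(* For every prime $p\ge 3$ we have $n(\mathbb{Z}_p) \le \frac{3p-1}{2}$.
   Context: For an integer $n\ge 1$, $\overleftrightarrow{K}_n$ denotes the complete digraph on $n$ vertices whose arc set consists of all ordered pairs $(x,y)$ of distinct vertices. For a set $A$, an $A$-arc-labelling of $\overleftrightarrow{K}_n$ is a function $w$ from the arc set of $\overleftrightarrow{K}_n$ to $A$. If $(A,+)$ is an Abelian group, $w$ is called zero-sum-free if there is no directed cycle (including directed cycles of length two) for which the sum of the arc-labels is $0$. For a non-trivial finite Abelian group $A$, $n(A)\ge 2$ is the smallest integer such that $\overleftrightarrow{K}_{n(A)}$ has no zero-sum-free $A$-arc-labelling. $\mathbb{Z}_p$ denotes the cyclic group of order $p$. *)

theory Defs
  imports "HOL-Computational_Algebra.Primes"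
begin

text \<open>Vertices of the complete digraph K_n are 0..n-1; arcs are all pairs (x,y), x \<noteq> y.
  A Z_p-arc-labelling is represented by an integer-valued function on arcs, labels read mod p.
  A directed cycle (length \<ge> 2) is a list of distinct vertices vs, with arcs
  vs!i -> vs!((i+1) mod length vs).\<close>

definition zero_sum_free_Zp :: "nat \<Rightarrow> nat \<Rightarrow> (nat \<Rightarrow> nat \<Rightarrow> int) \<Rightarrow> bool" where
  "zero_sum_free_Zp p n w \<longleftrightarrow>
     (\<forall>vs. distinct vs \<and> 2 \<le> length vs \<and> set vs \<subseteq> {..<n} \<longrightarrow>
        \<not> (int p dvd (\<Sum>i<length vs. w (vs ! i) (vs ! ((i + 1) mod length vs)))))"

definition n_Zp :: "nat \<Rightarrow> nat" where
  "n_Zp p = (LEAST n. 2 \<le> n \<and> \<not> (\<exists>w. zero_sum_free_Zp p n w))"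

end

theory Submission
  imports Defs "HOL-Number_Theory.Cong"
begin

definition sset :: "int \<Rightarrow> int set \<Rightarrow> int set \<Rightarrow> int set" where
  "sset P A B = {(a + b) mod P | a b. a \<in> A \<and> b \<in> B}"

lemma closed_full:
  fixes P :: int
  assumes pr: "prime P" and AP: "A \<subseteq> {0..<P}" and a0: "a0 \<in> A" and nd: "\<not> P dvd c"
    and cl: "\<forall>a\<in>A. (a + c) mod P \<in> A"
  shows "A = {0..<P}"
proof
  show "A \<subseteq> {0..<P}" by fact
  have P0: "P > 0" using pr prime_gt_0_int by blast
  have it: "(a0 + int n * c) mod P \<in> A" for n :: nat
  proof (induction n)
    case 0
    have "a0 mod P = a0" using AP a0 by (auto intro: mod_pos_pos_trivial)
    then show ?case using a0 by simp
  next
    case (Suc n)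
    have "(a0 + int (Suc n) * c) mod P = ((a0 + int n * c) + c) mod P"
      by (simp add: algebra_simps)
    also have "\<dots> = ((a0 + int n * c) mod P + c) mod P"
      by (simp add: mod_add_left_eq)
    finally have "(a0 + int (Suc n) * c) mod P = ((a0 + int n * c) mod P + c) mod P" .
    then show ?case using cl Suc by auto
  qed
  have cop: "coprime c P"
    using pr nd by (simp add: prime_imp_coprime coprime_commute)
  then obtain u where u: "[c * u = 1] (mod P)" using cong_solve_coprime_int by blast
  show "{0..<P} \<subseteq> A"
  proof
    fix r assume r: "r \<in> {0..<P}"
    define n where "n = nat (((r - a0) * u) mod P)"
    have n: "int n = ((r - a0) * u) mod P" using P0 by (simp add: n_def)
    have "[a0 + int n * c = a0 + ((r - a0) * u) * c] (mod P)"
      unfolding n by (intro cong_add cong_refl cong_mult) (simp add: cong_def)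
    also have "a0 + ((r - a0) * u) * c = a0 + (r - a0) * (c * u)" by (simp add: algebra_simps)
    also have "[a0 + (r - a0) * (c * u) = a0 + (r - a0) * 1] (mod P)"
      by (intro cong_add cong_refl cong_mult u)
    finally have "(a0 + int n * c) mod P = r mod P" by (simp add: cong_def)
    also have "r mod P = r" using r by (auto intro: mod_pos_pos_trivial)
    finally show "r \<in> A" using it[of n] by simp
  qed
qed

lemma modid_set: "x \<in> S \<Longrightarrow> S \<subseteq> {0..<(P::int)} \<Longrightarrow> x mod P = x"
  by (auto intro: mod_pos_pos_trivial)

lemma sset_mono: "A' \<subseteq> A \<Longrightarrow> B' \<subseteq> B \<Longrightarrow> sset P A' B' \<subseteq> sset P A B"
  unfolding sset_def by blast

lemma sset_sub: "P > 0 \<Longrightarrow> sset P A B \<subseteq> {0..<P}"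
  unfolding sset_def by auto

lemma CD_aux:
  fixes P :: int
  assumes pr: "prime P"
  shows "\<forall>A. finite B \<longrightarrow> B \<noteq> {} \<longrightarrow> B \<subseteq> {0..<P} \<longrightarrow> A \<noteq> {} \<longrightarrow> A \<subseteq> {0..<P} \<longrightarrow>
     min P (int (card A) + int (card B) - 1) \<le> int (card (sset P A B))"
proof (induction "card B" arbitrary: B rule: less_induct)
  case less
  have P0: "P > 0" using pr prime_gt_0_int by blast
  show ?case
  proof (intro allI impI)
    fix A assume fB: "finite B" and Bne: "B \<noteq> {}" and BP: "B \<subseteq> {0..<P}"
      and Ane: "A \<noteq> {}" and AP: "A \<subseteq> {0..<P}"
    have fA: "finite A" using AP finite_subset by blast
    have fS: "finite (sset P A B)" using sset_sub[OF P0] finite_subset by blast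
    have modid: "x \<in> {0..<P} \<Longrightarrow> x mod P = x" for x by (auto intro: mod_pos_pos_trivial)
    show "min P (int (card A) + int (card B) - 1) \<le> int (card (sset P A B))"
    proof (cases "card B = 1")
      case True
      then obtain b where Bb: "B = {b}" using card_1_singletonE by blast
      have img: "sset P A B = (\<lambda>a. (a + b) mod P) ` A" unfolding sset_def Bb by auto
      have "inj_on (\<lambda>a. (a + b) mod P) A"
      proof
        fix a1 a2 assume "a1 \<in> A" "a2 \<in> A" "(a1 + b) mod P = (a2 + b) mod P"
        then have "P dvd (a1 - a2)" by (simp add: mod_eq_dvd_iff)
        then have "a1 mod P = a2 mod P" by (simp add: mod_eq_dvd_iff)
        moreover have "a1 mod P = a1" "a2 mod P = a2" using AP \<open>a1 \<in> A\<close> \<open>a2 \<in> A\<close> by (auto intro: mod_pos_pos_trivial)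
        ultimately show "a1 = a2" by simp
      qed
      then have "card (sset P A B) = card A" using img card_image by metis
      then show ?thesis using True by simp
    next
      case False
      moreover have "card B \<noteq> 0" using fB Bne by simp
      ultimately have "card B \<ge> 2" by linarith
      obtain b0 where b0: "b0 \<in> B" using Bne by blast
      obtain b1 where b1: "b1 \<in> B" "b1 \<noteq> b0"
      proof -
        have "B - {b0} \<noteq> {}"
        proof
          assume "B - {b0} = {}"
          then have "B = {b0}" using b0 by blast
          then show False using \<open>card B \<ge> 2\<close> by simp
        qed
        then show ?thesis using that by blast
      qed
      show ?thesis
      proof (cases "\<forall>a\<in>A. \<forall>b\<in>B. (b + (a - b0)) mod P \<in> A")
        case True
        have nd: "\<not> P dvd (b1 - b0)"
        proof
          assume "P dvd (b1 - b0)"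
          then have "b1 mod P = b0 mod P" by (simp add: mod_eq_dvd_iff)
          then show False using modid_set[OF b0 BP] modid_set[OF b1(1) BP] b1(2) by simp
        qed
        have cl: "\<forall>a\<in>A. (a + (b1 - b0)) mod P \<in> A"
        proof
          fix a assume "a \<in> A"
          then have "(b1 + (a - b0)) mod P \<in> A" using True b1 by blast
          then show "(a + (b1 - b0)) mod P \<in> A" by (simp add: algebra_simps)
        qed
        obtain a0 where "a0 \<in> A" using Ane by blast
        have Afull: "A = {0..<P}" using closed_full[OF pr AP \<open>a0 \<in> A\<close> nd cl] .
        have "{0..<P} \<subseteq> sset P A B"
        proof
          fix r assume r: "r \<in> {0..<P}"
          have "(r - b0) mod P \<in> A" using Afull P0 by simp
          moreover have "((r - b0) mod P + b0) mod P = r" using modid[OF r]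
            by (simp add: mod_add_left_eq)
          ultimately show "r \<in> sset P A B" unfolding sset_def using b0 by force
        qed
        then have "card {0..<P} \<le> card (sset P A B)" using fS card_mono by blast
        then show ?thesis using P0 by simp
      next
        case False
        then obtain a b where a: "a \<in> A" and b: "b \<in> B" and nb: "(b + (a - b0)) mod P \<notin> A" by blast
        define e where "e = a - b0"
        define B' where "B' = {y\<in>B. (y + e) mod P \<in> A}"
        define B'' where "B'' = {y\<in>B. (y + e) mod P \<notin> A}"
        define A' where "A' = A \<union> (\<lambda>y. (y + e) mod P) ` B''"
        have b0B': "b0 \<in> B'" unfolding B'_def e_def using b0 a modid AP by auto
        have "b \<notin> B'" unfolding B'_def e_def using nb by auto
        then have B'B: "B' \<subset> B" unfolding B'_def using b by blast
        then have cB': "card B' < card B" using fB psubset_card_mono by blast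
        have fB': "finite B'" using B'B fB finite_subset by blast
        have IH: "min P (int (card A') + int (card B') - 1) \<le> int (card (sset P A' B'))"
        proof -
          have "A' \<noteq> {}" "A' \<subseteq> {0..<P}" "B' \<noteq> {}" "B' \<subseteq> {0..<P}"
            using Ane AP P0 b0B' B'B BP unfolding A'_def by auto
          then show ?thesis using less(1)[OF cB'] fB' by blast
        qed
        have sub: "sset P A' B' \<subseteq> sset P A B"
        proof
          fix s assume "s \<in> sset P A' B'"
          then obtain x y where s: "s = (x + y) mod P" and x: "x \<in> A'" and y: "y \<in> B'"
            unfolding sset_def by blast
          show "s \<in> sset P A B"
          proof (cases "x \<in> A")
            case True
            then show ?thesis using s y unfolding sset_def B'_def by blast
          next
            case False
            then obtain z where z: "z \<in> B''" and xz: "x = (z + e) mod P" using x unfolding A'_def by blast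
            have "s = ((y + e) mod P + z) mod P" unfolding s xz by (simp add: mod_simps algebra_simps)
            then show ?thesis using y z unfolding sset_def B'_def B''_def by blast
          qed
        qed
        have inj: "inj_on (\<lambda>y. (y + e) mod P) B''"
        proof
          fix a1 a2 assume "a1 \<in> B''" "a2 \<in> B''" "(a1 + e) mod P = (a2 + e) mod P"
          then have "P dvd (a1 - a2)" by (simp add: mod_eq_dvd_iff)
          then have "a1 mod P = a2 mod P" by (simp add: mod_eq_dvd_iff)
          moreover have "a1 mod P = a1" "a2 mod P = a2" using BP \<open>a1 \<in> B''\<close> \<open>a2 \<in> B''\<close> unfolding B''_def by (auto intro: mod_pos_pos_trivial)
          ultimately show "a1 = a2" by simp
        qed
        have fB'': "finite B''" unfolding B''_def using fB by simp
        have disj: "A \<inter> (\<lambda>y. (y + e) mod P) ` B'' = {}" unfolding B''_def by auto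
        have cA': "card A' = card A + card B''"
          unfolding A'_def using card_Un_disjoint[OF fA _ disj] fB'' card_image[OF inj] by simp
        have cB: "card B = card B' + card B''"
        proof -
          have "B = B' \<union> B''" "B' \<inter> B'' = {}" unfolding B'_def B''_def by auto
          then show ?thesis using card_Un_disjoint fB' fB'' by metis
        qed
        have "card (sset P A' B') \<le> card (sset P A B)" using sub fS card_mono by blast
        then show ?thesis using IH cA' cB by simp
      qed
    qed
  qed
qed

lemma CD:
  fixes P :: int
  assumes "prime P" "finite B" "B \<noteq> {}" "B \<subseteq> {0..<P}" "A \<noteq> {}" "A \<subseteq> {0..<P}"
  shows "min P (int (card A) + int (card B) - 1) \<le> int (card (sset P A B))"
  using CD_aux[OF assms(1)] assms(2-) by blast


definition ok3 :: "int \<Rightarrow> int set \<Rightarrow> bool" where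
  "ok3 P S \<longleftrightarrow> (\<exists>u\<in>S. \<exists>v\<in>S. \<exists>s\<in>S. \<not> P dvd (u - v) \<and> \<not> P dvd (v - s) \<and> \<not> P dvd (u - s))"

definition gs :: "('v \<Rightarrow> 'v \<Rightarrow> int) \<Rightarrow> 'v \<Rightarrow> 'v \<Rightarrow> 'v \<Rightarrow> int set" where
  "gs d e a b = {0, d a e, d b e, d a b + d b e, d b a + d a e}"

lemma gs_sym: "gs d e a b = gs d e b a" by (auto simp: gs_def)

lemma clause:
  assumes "\<not> ok3 P S" "0 \<in> S" "u \<in> S" "v \<in> S"
  shows "P dvd u \<or> P dvd v \<or> P dvd (u - v)"
proof -
  have "\<not> (\<not> P dvd (u - v) \<and> \<not> P dvd (v - 0) \<and> \<not> P dvd (u - 0))"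
    using assms unfolding ok3_def by blast
  then show ?thesis by auto
qed

lemma subA:
  fixes P :: int
  assumes two: "\<And>t. P dvd (2*t) \<Longrightarrow> P dvd t"
    and c_ae: "\<not> P dvd (d a e + d e a)"
    and nae: "\<not> P dvd d a e" and nbe: "\<not> P dvd d b e"
    and eq: "P dvd (d a e - d b e)"
    and h: "P dvd (d b a + d a e)"
    and no: "\<not> ok3 P (gs d a e b)"
  shows False
proof -
  have nba: "\<not> P dvd d b a"
  proof
    assume "P dvd d b a"
    then have "P dvd ((d b a + d a e) - d b a)" using h dvd_diff by blast
    then show False using nae by simp
  qed
  have cl1: "P dvd d b a \<or> P dvd d e a \<or> P dvd (d b a - d e a)"
    using clause[OF no] unfolding gs_def by simp
  have dea: "P dvd d e a"
  proof (rule ccontr)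
    assume "\<not> P dvd d e a"
    then have "P dvd (d b a - d e a)" using cl1 nba by blast
    then have "P dvd ((d b a + d a e) - (d b a - d e a))" using h dvd_diff by blast
    then show False using c_ae by simp
  qed
  have cl2: "P dvd d b a \<or> P dvd (d b e + d e a) \<or> P dvd (d b a - (d b e + d e a))"
    using clause[OF no] unfolding gs_def by simp
  show False
  proof (cases "P dvd (d b e + d e a)")
    case True
    then have "P dvd ((d b e + d e a) - d e a)" using dea dvd_diff by blast
    then show False using nbe by simp
  next
    case False
    then have k: "P dvd (d b a - (d b e + d e a))" using cl2 nba by blast
    have "P dvd ((d b a + d a e) - (d b a - (d b e + d e a)) - d e a + (d a e - d b e))"
      using dvd_add[OF dvd_diff[OF dvd_diff[OF h k] dea] eq] .
    then have "P dvd (2 * d a e)" by (simp add: algebra_simps)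
    then show False using two nae by blast
  qed
qed

lemma case1:
  fixes P :: int
  assumes two: "\<And>t. P dvd (2*t) \<Longrightarrow> P dvd t"
    and c_ab: "\<not> P dvd (d a b + d b a)"
    and c_ae: "\<not> P dvd (d a e + d e a)"
    and c_be: "\<not> P dvd (d b e + d e b)"
    and nae: "\<not> P dvd d a e" and nbe: "\<not> P dvd d b e"
    and no_e: "\<not> ok3 P (gs d e a b)"
    and no_a: "\<not> ok3 P (gs d a e b)"
    and no_b: "\<not> ok3 P (gs d b e a)"
  shows False
proof -
  have "P dvd d a e \<or> P dvd d b e \<or> P dvd (d a e - d b e)"
    using clause[OF no_e] unfolding gs_def by simp
  then have eq: "P dvd (d a e - d b e)" using nae nbe by blast
  then have eq': "P dvd (d b e - d a e)"
    by (metis dvd_minus_iff minus_diff_eq)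
  have "P dvd d b e \<or> P dvd (d a b + d b e) \<or> P dvd (d b e - (d a b + d b e))"
    using clause[OF no_e, of "d b e" "d a b + d b e"] unfolding gs_def by simp
  then have h1: "P dvd (d a b + d b e) \<or> P dvd d a b" using nbe by simp
  have "P dvd d a e \<or> P dvd (d b a + d a e) \<or> P dvd (d a e - (d b a + d a e))"
    using clause[OF no_e, of "d a e" "d b a + d a e"] unfolding gs_def by simp
  then have h2: "P dvd (d b a + d a e) \<or> P dvd d b a" using nae by simp
  show False
  proof (cases "P dvd (d b a + d a e)")
    case True
    then show False using subA[OF two c_ae nae nbe eq True no_a] by blast
  next
    case nf: False
    show False
    proof (cases "P dvd (d a b + d b e)")
      case True
      then show False using subA[OF two c_be nbe nae eq' True no_b] by blast
    next
      case False
      then have "P dvd d a b" "P dvd d b a" using h1 h2 nf by auto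
      then have "P dvd (d a b + d b a)" by (rule dvd_add)
      then show False using c_ab by blast
    qed
  qed
qed

lemma case2:
  fixes P :: int
  assumes two: "\<And>t. P dvd (2*t) \<Longrightarrow> P dvd t"
    and c_zq: "\<not> P dvd (d z q + d q z)"
    and c_yq: "\<not> P dvd (d y q + d q y)"
    and nyz: "\<not> P dvd d y z"
    and ez: "P dvd d y z \<or> P dvd d q z"
    and eq: "P dvd d z q \<or> P dvd d y q"
    and Oq: "\<not> ok3 P (gs d q y z)"
    and Oy: "\<not> ok3 P (gs d y z q)"
    and Oz: "\<not> ok3 P (gs d z q y)"
  shows False
proof -
  have dqz: "P dvd d q z" using ez nyz by blast
  have ndzq: "\<not> P dvd d z q"
  proof
    assume "P dvd d z q"
    then have "P dvd (d z q + d q z)" using dqz by (rule dvd_add)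
    then show False using c_zq by blast
  qed
  have dyq: "P dvd d y q" using eq ndzq by blast
  have ndqy: "\<not> P dvd d q y"
  proof
    assume "P dvd d q y"
    then have "P dvd (d y q + d q y)" using dyq by (intro dvd_add)
    then show False using c_yq by blast
  qed
  have "P dvd d z q \<or> P dvd (d y z + d z q) \<or> P dvd (d z q - (d y z + d z q))"
    using clause[OF Oq, of "d z q" "d y z + d z q"] unfolding gs_def by simp
  then have S1: "P dvd (d y z + d z q)" using ndzq nyz by auto
  have "P dvd d q y \<or> P dvd (d z q + d q y) \<or> P dvd (d q y - (d z q + d q y))"
    using clause[OF Oy, of "d q y" "d z q + d q y"] unfolding gs_def by simp
  then have S2: "P dvd (d z q + d q y)" using ndzq ndqy by auto
  have "P dvd d y z \<or> P dvd (d q y + d y z) \<or> P dvd (d y z - (d q y + d y z))"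
    using clause[OF Oz, of "d y z" "d q y + d y z"] unfolding gs_def by simp
  then have S3: "P dvd (d q y + d y z)" using nyz ndqy by auto
  have "P dvd ((d y z + d z q) + (d q y + d y z) - (d z q + d q y))"
    using dvd_diff[OF dvd_add[OF S1 S3] S2] .
  then have "P dvd (2 * d y z)" by (simp add: algebra_simps)
  then show False using two nyz by blast
qed

lemma gadget:
  fixes P :: int
  assumes two: "\<And>t. P dvd (2*t) \<Longrightarrow> P dvd t"
    and c_yz: "\<not> P dvd (d y z + d z y)"
    and c_yq: "\<not> P dvd (d y q + d q y)"
    and c_zq: "\<not> P dvd (d z q + d q z)"
  shows "ok3 P (gs d q y z) \<or> ok3 P (gs d y z q) \<or> ok3 P (gs d z y q)"
proof (rule ccontr)
  assume "\<not> ?thesis"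
  then have Oq: "\<not> ok3 P (gs d q y z)" "\<not> ok3 P (gs d q z y)"
    and Oy: "\<not> ok3 P (gs d y z q)" "\<not> ok3 P (gs d y q z)"
    and Oz: "\<not> ok3 P (gs d z y q)" "\<not> ok3 P (gs d z q y)"
    using gs_sym by metis+
  have c_zy: "\<not> P dvd (d z y + d y z)" using c_yz by (simp add: add.commute)
  have c_qy: "\<not> P dvd (d q y + d y q)" using c_yq by (simp add: add.commute)
  have c_qz: "\<not> P dvd (d q z + d z q)" using c_zq by (simp add: add.commute)
  have A: "P dvd d y q \<or> P dvd d z q"
    using case1[OF two c_yz c_yq c_zq _ _ Oq(1) Oy(2) Oz(2)] by blast
  have B: "P dvd d z y \<or> P dvd d q y"
    using case1[OF two c_zq c_zy c_qy _ _ Oy(1) Oz(1) Oq(1)] by blast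
  have C: "P dvd d y z \<or> P dvd d q z"
    using case1[OF two c_yq c_yz c_qz _ _ Oz(1) Oy(1) Oq(2)] by blast
  show False
  proof (cases "P dvd d y z")
    case False
    show False using case2[OF two c_zq c_yq False C _ Oq(1) Oy(1) Oz(2)] A by blast
  next
    case True
    then have nzy: "\<not> P dvd d z y"
      using c_yz by (metis \<open>P dvd d y z\<close> dvd_add_right_iff)
    show False using case2[OF two c_yq c_zq nzy B _ Oq(2) Oz(1) Oy(2)] A by blast
  qed
qed


fun psum :: "(nat \<Rightarrow> nat \<Rightarrow> int) \<Rightarrow> nat list \<Rightarrow> int" where
  "psum w (x # y # zs) = w x y + psum w (y # zs)"
| "psum w _ = 0"

lemma psum_append:
  "xs \<noteq> [] \<Longrightarrow> ys \<noteq> [] \<Longrightarrow> psum w (xs @ ys) = psum w xs + w (last xs) (hd ys) + psum w ys"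
proof (induction xs)
  case Nil
  then show ?case by simp
next
  case (Cons x xs)
  show ?case
  proof (cases xs)
    case Nil
    then show ?thesis using Cons.prems by (cases ys) auto
  next
    case (Cons x' xs'')
    then show ?thesis using Cons.IH Cons.prems by simp
  qed
qed

lemma psum_nth: "psum w vs = (\<Sum>i<length vs - 1. w (vs!i) (vs!Suc i))"
proof (induction w vs rule: psum.induct)
  case (1 w x y zs)
  then show ?case by (simp del: sum.lessThan_Suc add: sum.lessThan_Suc_shift)
qed auto

lemma cyc_sum:
  assumes "vs \<noteq> []"
  shows "(\<Sum>i<length vs. w (vs ! i) (vs ! ((i + 1) mod length vs))) = psum w vs + w (last vs) (hd vs)"
proof -
  obtain m where len: "length vs = Suc m" using assms by (cases vs) auto
  have "(\<Sum>i<length vs. w (vs ! i) (vs ! ((i + 1) mod length vs)))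
      = (\<Sum>i<m. w (vs ! i) (vs ! ((i + 1) mod Suc m))) + w (vs ! m) (vs ! ((m + 1) mod Suc m))"
    unfolding len by simp
  also have "(\<Sum>i<m. w (vs ! i) (vs ! ((i + 1) mod Suc m))) = (\<Sum>i<m. w (vs ! i) (vs ! Suc i))"
    by (rule sum.cong) auto
  also have "\<dots> = psum w vs" using psum_nth[of w vs] len by simp
  also have "w (vs ! m) (vs ! ((m + 1) mod Suc m)) = w (last vs) (hd vs)"
    using assms len by (simp add: last_conv_nth hd_conv_nth)
  finally show ?thesis .
qed

lemma zsf_cycle:
  assumes "zero_sum_free_Zp p n w" "distinct vs" "2 \<le> length vs" "set vs \<subseteq> {..<n}"
  shows "\<not> int p dvd (psum w vs + w (last vs) (hd vs))"
proof -
  have "vs \<noteq> []" using assms(3) by auto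
  have "\<not> int p dvd (\<Sum>i<length vs. w (vs ! i) (vs ! ((i + 1) mod length vs)))"
    using assms unfolding zero_sum_free_Zp_def by blast
  then show ?thesis using cyc_sum[OF \<open>vs \<noteq> []\<close>] by simp
qed

lemma zsf_two:
  assumes "zero_sum_free_Zp p n w" "a \<noteq> b" "a < n" "b < n"
  shows "\<not> int p dvd (w a b + w b a)"
  using zsf_cycle[OF assms(1), of "[a,b]"] assms by simp

definition ispath :: "nat set \<Rightarrow> nat \<Rightarrow> nat \<Rightarrow> nat list \<Rightarrow> bool" where
  "ispath W v u vs \<longleftrightarrow> vs \<noteq> [] \<and> hd vs = v \<and> last vs = u \<and> distinct vs \<and> set vs \<subseteq> W"

lemma step_gen:
  fixes P :: int
  assumes pr: "prime P" and TP: "T \<subseteq> {0..<P}" and Tne: "T \<noteq> {}"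
    and Tpath: "\<forall>t\<in>T. \<exists>vs. ispath W 0 x vs \<and> psum w vs mod P = t"
    and dist: "distinct [e,a,b]" and nW: "e \<notin> W" "a \<notin> W" "b \<notin> W"
    and ok: "ok3 P (gs (\<lambda>u v. w u v + w x u - w x v) e a b)"
  shows "\<exists>T'. T' \<subseteq> {0..<P} \<and> min P (int (card T) + 2) \<le> int (card T') \<and>
           (\<forall>t\<in>T'. \<exists>vs. ispath (W \<union> {e,a,b}) 0 e vs \<and> psum w vs mod P = t)"
proof -
  have P0: "P > 0" using pr prime_gt_0_int by blast
  define d where "d = (\<lambda>u v. w u v + w x u - w x v)"
  define segs where "segs = {[e],[a,e],[b,e],[a,b,e],[b,a,e]}"
  define ov where "ov s = w x (hd s) + psum w s" for s
  have gsov: "\<exists>s\<in>segs. ov s = g + w x e" if "g \<in> gs d e a b" for g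
    using that unfolding gs_def segs_def ov_def d_def by (auto simp: algebra_simps)
  have segf: "s \<noteq> [] \<and> last s = e \<and> distinct s \<and> set s \<subseteq> {e,a,b}" if "s \<in> segs" for s
    using that dist unfolding segs_def by auto
  obtain g1 g2 g3 where g: "g1 \<in> gs d e a b" "g2 \<in> gs d e a b" "g3 \<in> gs d e a b"
    and nd: "\<not> P dvd (g1 - g2)" "\<not> P dvd (g2 - g3)" "\<not> P dvd (g1 - g3)"
    using ok unfolding ok3_def d_def by blast
  obtain s1 where s1: "s1 \<in> segs" "ov s1 = g1 + w x e" using gsov g(1) by blast
  obtain s2 where s2: "s2 \<in> segs" "ov s2 = g2 + w x e" using gsov g(2) by blast
  obtain s3 where s3: "s3 \<in> segs" "ov s3 = g3 + w x e" using gsov g(3) by blast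
  define A where "A = {ov s1 mod P, ov s2 mod P, ov s3 mod P}"
  have ne12: "ov s1 mod P \<noteq> ov s2 mod P" using nd(1) s1 s2 by (simp add: mod_eq_dvd_iff)
  have ne23: "ov s2 mod P \<noteq> ov s3 mod P" using nd(2) s2 s3 by (simp add: mod_eq_dvd_iff)
  have ne13: "ov s1 mod P \<noteq> ov s3 mod P" using nd(3) s1 s3 by (simp add: mod_eq_dvd_iff)
  have cA: "card A = 3" unfolding A_def using ne12 ne23 ne13 by simp
  have AP: "A \<subseteq> {0..<P}" unfolding A_def using P0 by auto
  have fA: "finite A" unfolding A_def by simp
  have Ane: "A \<noteq> {}" unfolding A_def by simp
  define T' where "T' = sset P T A"
  have cd: "min P (int (card T) + int (card A) - 1) \<le> int (card T')"
    unfolding T'_def using CD[OF pr fA Ane AP Tne TP] .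
  have "\<exists>vs. ispath (W \<union> {e,a,b}) 0 e vs \<and> psum w vs mod P = t" if tT: "t \<in> T'" for t
  proof -
    obtain t0 al where t: "t = (t0 + al) mod P" and t0: "t0 \<in> T" and al: "al \<in> A"
      using tT unfolding T'_def sset_def by blast
    obtain s where s: "s \<in> segs" "al = ov s mod P" using al s1 s2 s3 unfolding A_def by blast
    obtain vs where vs: "ispath W 0 x vs" "psum w vs mod P = t0" using Tpath t0 by blast
    have sf: "s \<noteq> []" "last s = e" "distinct s" "set s \<subseteq> {e,a,b}" using segf[OF s(1)] by auto
    have "set vs \<inter> set s = {}" using vs(1) sf(4) nW unfolding ispath_def by blast
    then have ip: "ispath (W \<union> {e,a,b}) 0 e (vs @ s)"
      using vs(1) sf unfolding ispath_def by auto
    have "psum w (vs @ s) = psum w vs + ov s"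
      using psum_append[of vs s w] vs(1) sf(1) unfolding ispath_def ov_def by simp
    then have "psum w (vs @ s) mod P = t"
      unfolding t s(2) vs(2)[symmetric] by (simp add: mod_add_eq)
    then show ?thesis using ip by blast
  qed
  moreover have "T' \<subseteq> {0..<P}" unfolding T'_def using sset_sub[OF P0] .
  ultimately show ?thesis using cd cA by (intro exI[of _ T']) auto
qed


lemma minlem: "min (P::int) a \<le> c \<Longrightarrow> min P (c+2) \<le> c' \<Longrightarrow> min P (a+2) \<le> c'"
  by (simp add: min_def split: if_splits)

lemma iter:
  assumes pr: "prime p" and p3: "3 \<le> p" and z: "zero_sum_free_Zp p n w"
  shows "1 + 3*k \<le> n \<Longrightarrow> \<exists>x T. x < 1 + 3*k \<and> (1 \<le> k \<longrightarrow> x \<noteq> 0) \<and> T \<subseteq> {0..<int p} \<and>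
     min (int p) (2 * int k + 1) \<le> int (card T) \<and>
     (\<forall>t\<in>T. \<exists>vs. ispath {..<1 + 3*k} 0 x vs \<and> psum w vs mod int p = t)"
proof (induction k)
  case 0
  have "ispath {..<1} 0 0 [0]" unfolding ispath_def by simp
  then have "\<forall>t\<in>{0}. \<exists>vs. ispath {..<1 + 3*0} 0 0 vs \<and> psum w vs mod int p = t" by force
  moreover have "{0} \<subseteq> {0..<int p}" using p3 by simp
  ultimately show ?case by (intro exI[of _ 0] exI[of _ "{0::int}"]) simp
next
  case (Suc k)
  define m where "m = 1 + 3*k"
  have mn: "m + 3 \<le> n" using Suc.prems unfolding m_def by simp
  have h: "1 + 3 * k \<le> n" using Suc.prems by simp
  have ex: "\<exists>x T. x < m \<and> (1 \<le> k \<longrightarrow> x \<noteq> 0) \<and> T \<subseteq> {0..<int p} \<and>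
     min (int p) (2 * int k + 1) \<le> int (card T) \<and>
     (\<forall>t\<in>T. \<exists>vs. ispath {..<m} 0 x vs \<and> psum w vs mod int p = t)"
    unfolding m_def using Suc.IH[OF h] .
  then obtain x T where x: "x < m" and TP: "T \<subseteq> {0..<int p}" and cT: "min (int p) (2 * int k + 1) \<le> int (card T)"
    and Tp: "\<forall>t\<in>T. \<exists>vs. ispath {..<m} 0 x vs \<and> psum w vs mod int p = t"
    by blast
  have P: "prime (int p)" using pr by simp
  have two: "int p dvd t" if "int p dvd (2 * t)" for t
  proof -
    have "int p dvd 2 \<or> int p dvd t" using that P prime_dvd_mult_iff by blast
    moreover have "\<not> int p dvd 2"
    proof
      assume "int p dvd 2"
      then have "int p \<le> 2" by (rule zdvd_imp_le) simp
      then show False using p3 by simp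
    qed
    ultimately show ?thesis by blast
  qed
  have Tne: "T \<noteq> {}"
  proof
    assume "T = {}"
    then show False using cT p3 by simp
  qed
  define d where "d = (\<lambda>u v. w u v + w x u - w x v)"
  define y where "y = m"
  define zz where "zz = m + 1"
  define q where "q = m + 2"
  have c1: "\<not> int p dvd (d y zz + d zz y)"
    using zsf_two[OF z, of y zz] mn unfolding d_def y_def zz_def by simp
  have c2: "\<not> int p dvd (d y q + d q y)"
    using zsf_two[OF z, of y q] mn unfolding d_def y_def q_def by simp
  have c3: "\<not> int p dvd (d zz q + d q zz)"
    using zsf_two[OF z, of zz q] mn unfolding d_def zz_def q_def by simp
  have G: "ok3 (int p) (gs d q y zz) \<or> ok3 (int p) (gs d y zz q) \<or> ok3 (int p) (gs d zz y q)"
    using gadget[of "int p" d y zz q] two c1 c2 c3 by blast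
  have Wset0: "{..<m} \<union> {m, m+1, m+2} = {..<m+3}" by auto
  have Wset: "{..<m} \<union> {y,zz,q} = {..<1 + 3 * Suc k}"
    using Wset0 unfolding y_def zz_def q_def by (simp add: m_def)
  have fin: "\<exists>x T. x < 1 + 3 * Suc k \<and> (1 \<le> Suc k \<longrightarrow> x \<noteq> 0) \<and> T \<subseteq> {0..<int p} \<and>
     min (int p) (2 * int (Suc k) + 1) \<le> int (card T) \<and>
     (\<forall>t\<in>T. \<exists>vs. ispath {..<1 + 3 * Suc k} 0 x vs \<and> psum w vs mod int p = t)"
    if okk: "ok3 (int p) (gs d e a b)" and eab: "{e,a,b} = {y,zz,q}" and di: "distinct [e,a,b]" for e a b
  proof -
    have mem: "e \<in> {y,zz,q}" "a \<in> {y,zz,q}" "b \<in> {y,zz,q}" using eab by blast+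
    have nW: "e \<notin> {..<m}" "a \<notin> {..<m}" "b \<notin> {..<m}"
      using mem unfolding y_def zz_def q_def by auto
    obtain T' where T'P: "T' \<subseteq> {0..<int p}" and cT': "min (int p) (int (card T) + 2) \<le> int (card T')"
      and T'p: "\<forall>t\<in>T'. \<exists>vs. ispath ({..<m} \<union> {e,a,b}) 0 e vs \<and> psum w vs mod int p = t"
      using step_gen[OF P TP Tne Tp di nW] okk unfolding d_def by blast
    have "min (int p) (2 * int (Suc k) + 1) \<le> int (card T')"
      using minlem[OF cT cT'] by simp
    moreover have "e < 1 + 3 * Suc k" "e \<noteq> 0" using mem(1) unfolding y_def zz_def q_def m_def by auto
    moreover have "\<forall>t\<in>T'. \<exists>vs. ispath {..<1 + 3 * Suc k} 0 e vs \<and> psum w vs mod int p = t"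
      using T'p unfolding eab Wset .
    ultimately show ?thesis using T'P by blast
  qed
  from G show ?case
  proof (elim disjE)
    assume "ok3 (int p) (gs d q y zz)"
    moreover have "{q,y,zz} = {y,zz,q}" by auto
    moreover have "distinct [q,y,zz]" unfolding y_def zz_def q_def by simp
    ultimately show ?case by (rule fin)
  next
    assume "ok3 (int p) (gs d y zz q)"
    moreover have "{y,zz,q} = {y,zz,q}" by auto
    moreover have "distinct [y,zz,q]" unfolding y_def zz_def q_def by simp
    ultimately show ?case by (rule fin)
  next
    assume "ok3 (int p) (gs d zz y q)"
    moreover have "{zz,y,q} = {y,zz,q}" by auto
    moreover have "distinct [zz,y,q]" unfolding y_def zz_def q_def by simp
    ultimately show ?case by (rule fin)
  qed
qed

theorem theorem2:
  fixes p :: nat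
  assumes "prime p" and "3 \<le> p"
  shows "n_Zp p \<le> (3 * p - 1) div 2"
proof -
  have "odd p" using assms prime_odd_nat by simp
  then obtain K where pK: "p = 2 * K + 1" using oddE by blast
  have K1: "1 \<le> K" using assms(2) pK by simp
  have N: "(3 * p - 1) div 2 = 1 + 3 * K" unfolding pK by simp
  have noz: "\<not> (\<exists>w. zero_sum_free_Zp p (1 + 3 * K) w)"
  proof
    assume "\<exists>w. zero_sum_free_Zp p (1 + 3 * K) w"
    then obtain w where z: "zero_sum_free_Zp p (1 + 3 * K) w" by blast
    obtain x T where x: "x < 1 + 3 * K" "x \<noteq> 0" and TP: "T \<subseteq> {0..<int p}"
      and cT: "min (int p) (2 * int K + 1) \<le> int (card T)"
      and Tp: "\<forall>t\<in>T. \<exists>vs. ispath {..<1 + 3 * K} 0 x vs \<and> psum w vs mod int p = t"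
      using iter[OF assms z, of K] K1 by auto
    have cT2: "int p \<le> int (card T)" using cT pK by simp
    define t0 where "t0 = (- w x 0) mod int p"
    have t0P: "t0 \<in> {0..<int p}" unfolding t0_def using assms(2) by simp
    have "t0 \<in> T"
    proof (rule ccontr)
      assume "t0 \<notin> T"
      then have "T \<subseteq> {0..<int p} - {t0}" using TP by blast
      then have "card T \<le> card ({0..<int p} - {t0})" by (intro card_mono) auto
      also have "\<dots> = p - 1" using t0P by simp
      finally show False using cT2 assms(2) by simp
    qed
    then obtain vs where vs: "ispath {..<1 + 3 * K} 0 x vs" "psum w vs mod int p = t0" using Tp by blast
    have "int p dvd (psum w vs - (- w x 0))" using vs(2) unfolding t0_def by (simp add: mod_eq_dvd_iff)
    then have dv: "int p dvd (psum w vs + w (last vs) (hd vs))" using vs(1) unfolding ispath_def by simp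
    have len: "2 \<le> length vs"
    proof (rule ccontr)
      assume "\<not> 2 \<le> length vs"
      moreover have "vs \<noteq> []" using vs(1) unfolding ispath_def by simp
      moreover have "length vs \<noteq> 0" using \<open>vs \<noteq> []\<close> by simp
      ultimately have "length vs = 1" by linarith
      then have "last vs = hd vs" using \<open>vs \<noteq> []\<close> by (simp add: last_conv_nth hd_conv_nth)
      then show False using vs(1) x(2) unfolding ispath_def by simp
    qed
    show False using zsf_cycle[OF z _ len] vs(1) dv unfolding ispath_def by blast
  qed
  have "n_Zp p \<le> 1 + 3 * K"
    unfolding n_Zp_def by (rule Least_le) (use noz K1 in simp)
  then show ?thesis using N by simp
qed

end
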